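(* Let $\alpha\neq\beta$, let $(g_n)$ be as in the context, and let $x$ be a complex number (or indeterminate) with $x\neq\alpha$. Put $G(t)=\sum_{n\ge0}(\alpha-\beta)^{n-1}g_n(x)t^n$. Then, as formal power series in $t$, $$G(t)=\frac{1+t(x-\beta)(\alpha-\beta)-\sqrt{1-2t(x-\beta)(\alpha+\beta)+t^2(x-\beta)^2(\alpha-\beta)^2}+\dfrac{2(x-\alpha)}{\alpha-\beta}}{2\bigl(x-\alpha+xt(\alpha-\beta)^2\bigr)},$$ where the square root denotes the formal power series with constant term $1$.
   Context: Fix complex numbers $\alpha\neq\beta$. Define polynomials $g_n(x)\in\mathbb{C}[x]$ recursively by $g_0(x)=1$ and, for $n\ge1$, $$(x-\alpha)(\alpha-\beta)^{n-1}g_n(x)=\alpha(x-\beta)^n g_{n-1}(\alpha)-x(\alpha-\beta)^n g_{n-1}(x).$$ (The right-hand side vanishes at $x=\alpha$, so it is divisible by $x-\alpha$ and $g_n$ is a uniquely determined polynomial.) *)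

theory Defs
  imports "HOL-Computational_Algebra.Computational_Algebra"
begin

text \<open>The defining relation
  (x-a)(a-b)^(n-1) g_n(x) = a (x-b)^n g_(n-1)(a) - x (a-b)^n g_(n-1)(x)
  is solved for g_n by exact polynomial division by (x - a).\<close>
fun gpoly :: "complex \<Rightarrow> complex \<Rightarrow> nat \<Rightarrow> complex poly" where
  "gpoly a b 0 = 1"
| "gpoly a b (Suc n) =
     smult (1 / (a - b) ^ n)
       ((smult (a * poly (gpoly a b n) a) ([:- b, 1:] ^ Suc n)
         - smult ((a - b) ^ Suc n) ([:0, 1:] * gpoly a b n)) div [:- a, 1:])"

definition fps_sqrt1 :: "complex fps \<Rightarrow> complex fps" where
  "fps_sqrt1 P = fps_radical (\<lambda>_ _. 1) 2 P"

end

theory Submission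
  imports Defs
begin


definition Hp :: "complex \<Rightarrow> complex \<Rightarrow> nat \<Rightarrow> complex poly" where
  "Hp a b n = smult ((a - b) powi (int n - 1)) (gpoly a b n)"

lemma Hp_rec:
  assumes ab: "a \<noteq> b"
  shows "[:- a, 1:] * Hp a b (Suc n) + smult ((a - b)^2) ([:0, 1:] * Hp a b n)
       = smult (a * poly (gpoly a b n) a) ([:- b, 1:] ^ Suc n)"
proof -
  define num where "num = smult (a * poly (gpoly a b n) a) ([:- b, 1:] ^ Suc n)
         - smult ((a - b) ^ Suc n) ([:0, 1:] * gpoly a b n)"
  have "poly num a = 0" unfolding num_def by (simp add: algebra_simps)
  hence dv: "[:- a, 1:] dvd num" by (simp add: poly_eq_0_iff_dvd)
  have d0: "a - b \<noteq> 0" using ab by simp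
  have "Hp a b (Suc n) = num div [:- a, 1:]"
    using d0 by (simp add: Hp_def num_def)
  hence e1: "[:- a, 1:] * Hp a b (Suc n) = num" using dv by (simp del: mult_pCons_left)
  have pw: "(a - b)^2 * (a - b) powi (int n - 1) = (a - b) ^ Suc n"
  proof -
    have "(a - b) powi (int n - 1 + 2) = (a - b) powi (int n - 1) * (a - b) powi 2"
      using d0 by (rule power_int_add[OF disjI1])
    hence "(a - b)^2 * (a - b) powi (int n - 1) = (a - b) powi (int n - 1 + 2)"
      by (metis mult.commute power_int_of_nat of_nat_numeral)
    also have "int n - 1 + 2 = int (Suc n)" by simp
    finally show ?thesis by (simp only: power_int_of_nat)
  qed
  have e2: "smult ((a - b)^2) ([:0, 1:] * Hp a b n) = smult ((a - b) ^ Suc n) ([:0, 1:] * gpoly a b n)"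
    unfolding Hp_def using pw by (simp add: mult_smult_right flip: pw)
  show ?thesis using e1 e2 unfolding num_def by simp
qed


lemma G_rel:
  assumes ab: "a \<noteq> b"
  shows "fps_const (x - a) * Abs_fps (\<lambda>n. poly (Hp a b n) x)
       + fps_X * (fps_const (x * (a - b)^2) * Abs_fps (\<lambda>n. poly (Hp a b n) x))
     = fps_const ((x - a) / (a - b)) + fps_X * (fps_const (a * (x - b)) *
         (Abs_fps (\<lambda>n. poly (gpoly a b n) a) oo (fps_const (x - b) * fps_X)))"
proof (rule fps_ext)
  fix n
  show "(fps_const (x - a) * Abs_fps (\<lambda>n. poly (Hp a b n) x)
       + fps_X * (fps_const (x * (a - b)^2) * Abs_fps (\<lambda>n. poly (Hp a b n) x))) $ n
     = (fps_const ((x - a) / (a - b)) + fps_X * (fps_const (a * (x - b)) *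
         (Abs_fps (\<lambda>n. poly (gpoly a b n) a) oo (fps_const (x - b) * fps_X)))) $ n"
  proof (cases n)
    case 0
    then show ?thesis by (simp add: Hp_def power_int_minus divide_simps)
  next
    case (Suc m)
    have "poly ([:- a, 1:] * Hp a b (Suc m) + smult ((a - b)^2) ([:0, 1:] * Hp a b m)) x
        = poly (smult (a * poly (gpoly a b m) a) ([:- b, 1:] ^ Suc m)) x"
      using Hp_rec[OF ab] by simp
    hence eq: "(x - a) * poly (Hp a b (Suc m)) x + (a - b)^2 * (x * poly (Hp a b m) x)
        = a * poly (gpoly a b m) a * (x - b) ^ Suc m" by (simp add: algebra_simps)
    have l: "(fps_const (x - a) * Abs_fps (\<lambda>n. poly (Hp a b n) x)
       + fps_X * (fps_const (x * (a - b)^2) * Abs_fps (\<lambda>n. poly (Hp a b n) x))) $ n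
       = (x - a) * poly (Hp a b (Suc m)) x + (a - b)^2 * (x * poly (Hp a b m) x)"
      using Suc by (simp add: fps_X_mult_nth)
    have r: "(fps_const ((x - a) / (a - b)) + fps_X * (fps_const (a * (x - b)) *
         (Abs_fps (\<lambda>n. poly (gpoly a b n) a) oo (fps_const (x - b) * fps_X)))) $ n
       = a * poly (gpoly a b m) a * (x - b) ^ Suc m"
      using Suc by (simp add: fps_X_mult_nth fps_compose_linear)
    show ?thesis using l r eq by simp
  qed
qed


lemma fps_X_oo: "(u :: complex fps) $ 0 = 0 \<Longrightarrow> fps_X oo u = u"
  by (simp add: fps_X_fps_compose fps_eq_iff)

lemma kernel:
  assumes ab: "a \<noteq> b"
  defines "C \<equiv> Abs_fps (\<lambda>n. poly (gpoly a b n) a)"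
  defines "Y \<equiv> fps_const (2 * a) * fps_X * C"
  shows "Y^2 - fps_const 2 * Y * (1 + fps_const (a - b) * fps_X) + fps_const (4 * a) * fps_X = 0"
proof -
  define d where "d = a - b"
  have d0: "d \<noteq> 0" using ab by (simp add: d_def)
  define V where "V = fps_const a * inverse (1 + fps_const (d^2) * fps_X)"
  have V1: "V * (1 + fps_const (d^2) * fps_X) = fps_const a"
  proof -
    have "inverse (1 + fps_const (d^2) * fps_X) * (1 + fps_const (d^2) * fps_X) = 1"
      by (rule inverse_mult_eq_1) simp
    thus ?thesis unfolding V_def by (metis mult.assoc mult.right_neutral)
  qed
  have V0: "V $ 0 = a" by (simp add: V_def)
  define U where "U = V - fps_const a"
  have U0: "U $ 0 = 0" by (simp add: U_def V0)
  define E where "E p = fps_of_poly (pcompose p [:a, 1:]) oo U" for p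
  have E_add: "E (p + q) = E p + E q" for p q
    by (simp add: E_def pcompose_add fps_of_poly_add fps_compose_add_distrib)
  have E_mult: "E (p * q) = E p * E q" for p q
    by (simp add: E_def pcompose_mult fps_of_poly_mult fps_compose_mult_distrib[OF U0])
  have E_smult: "E (smult c p) = fps_const c * E p" for c p
    by (simp add: E_def pcompose_smult fps_of_poly_smult fps_compose_mult_distrib[OF U0])
  have E_pow: "E (p ^ n) = E p ^ n" for p n
    by (induct n) (simp_all add: E_mult, simp add: E_def pcompose_1)
  have E_lin: "E [:c, 1:] = fps_const (c + a) + U" for c
  proof -
    have "pcompose [:c, 1:] [:a, 1:] = [:c + a, 1:]" by (simp add: pcompose_pCons)
    thus ?thesis by (simp add: E_def fps_of_poly_linear fps_compose_add_distrib fps_X_oo[OF U0] add.commute)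
  qed
  define c where "c n = poly (gpoly a b n) a" for n
  have step: "U * E (Hp a b (Suc n)) + fps_const (d^2) * (V * E (Hp a b n))
      = fps_const (a * c n) * (U + fps_const d) ^ Suc n" for n
  proof -
    have "E ([:- a, 1:] * Hp a b (Suc n) + smult ((a - b)^2) ([:0, 1:] * Hp a b n))
        = E (smult (a * poly (gpoly a b n) a) ([:- b, 1:] ^ Suc n))"
      using Hp_rec[OF ab] by simp
    hence "E [:- a, 1:] * E (Hp a b (Suc n)) + fps_const ((a - b)^2) * (E [:0, 1:] * E (Hp a b n))
        = fps_const (a * poly (gpoly a b n) a) * E [:- b, 1:] ^ Suc n"
      by (simp only: E_add E_mult E_smult E_pow)
    moreover have "E [:- a, 1:] = U" using E_lin[of "-a"] by simp
    moreover have "E [:0, 1:] = V" using E_lin[of 0] by (simp add: U_def)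
    moreover have "E [:- b, 1:] = U + fps_const d" using E_lin[of "-b"] by (simp add: d_def add.commute)
    ultimately show ?thesis by (simp add: c_def d_def)
  qed
  have UV: "U = - (V * fps_const (d^2) * fps_X)"
    using V1 unfolding U_def by (simp add: algebra_simps)
  have step': "fps_const (d^2) * V * (E (Hp a b n) - fps_X * E (Hp a b (Suc n)))
      = fps_const (a * c n) * (U + fps_const d) ^ Suc n" for n
    using step[of n] unfolding UV by (simp add: algebra_simps)
  have tele: "fps_const (d^2) * V * (E (Hp a b 0) - fps_X ^ N * E (Hp a b N))
      = (\<Sum>n<N. fps_X ^ n * (fps_const (a * c n) * (U + fps_const d) ^ Suc n))" for N
  proof (induct N)
    case 0 then show ?case by simp
  next
    case (Suc N)
    have "fps_const (d^2) * V * (E (Hp a b 0) - fps_X ^ Suc N * E (Hp a b (Suc N)))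
       = fps_const (d^2) * V * (E (Hp a b 0) - fps_X ^ N * E (Hp a b N))
         + fps_X ^ N * (fps_const (d^2) * V * (E (Hp a b N) - fps_X * E (Hp a b (Suc N))))"
      by (simp add: algebra_simps)
    then show ?case using Suc step'[of N] by simp
  qed
  have E0: "E (Hp a b 0) = fps_const (1 / d)"
  proof -
    have "Hp a b 0 = [:1 / d:]" by (simp add: Hp_def d_def power_int_minus divide_simps)
    thus ?thesis by (simp add: E_def fps_of_poly_const)
  qed
  define \<sigma> where "\<sigma> = fps_X * (U + fps_const d)"
  have s0: "\<sigma> $ 0 = 0" by (simp add: \<sigma>_def)
  have s1: "\<sigma> $ 1 = d" by (simp add: \<sigma>_def U0)
  have sum_eq: "(\<Sum>n<N. fps_X ^ n * (fps_const (a * c n) * (U + fps_const d) ^ Suc n))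
      = fps_const a * (U + fps_const d) * (\<Sum>n<N. fps_const (c n) * \<sigma> ^ n)" for N
    unfolding sum_distrib_left
    by (rule sum.cong) (simp_all only: \<sigma>_def power_mult_distrib power_Suc fps_const_mult[symmetric] mult_ac)
  have claim: "fps_const d * V = fps_const a * (U + fps_const d) * (C oo \<sigma>)"
  proof (rule fps_ext)
    fix k
    define N where "N = Suc k"
    let ?F = "fps_const a * (U + fps_const d)"
    let ?S = "\<Sum>n<N. fps_const (c n) * \<sigma> ^ n"
    have "(fps_const (d^2) * V * (E (Hp a b 0) - fps_X ^ N * E (Hp a b N))) $ k = (?F * ?S) $ k"
      using tele[of N] sum_eq[of N] by simp
    moreover have "(fps_const (d^2) * V * (E (Hp a b 0) - fps_X ^ N * E (Hp a b N))) $ k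
        = (fps_const d * V) $ k"
    proof -
      have "(fps_X ^ N * (fps_const (d^2) * V * E (Hp a b N))) $ k = 0"
        unfolding N_def by (simp only: fps_X_power_mult_nth) simp
      moreover have "fps_const (d^2) * V * (E (Hp a b 0) - fps_X ^ N * E (Hp a b N))
          = fps_const d * V - fps_X ^ N * (fps_const (d^2) * V * E (Hp a b N))"
        using d0 by (simp add: E0 algebra_simps power2_eq_square)
      ultimately show ?thesis by simp
    qed
    moreover have "(?F * ?S) $ k = (?F * (C oo \<sigma>)) $ k"
    proof -
      have "?S $ j = (C oo \<sigma>) $ j" if "j \<le> k" for j
      proof -
        have z: "(\<sigma> ^ i) $ j = 0" if "j < i" for i
          using startsby_zero_power_prefix[OF s0] that by blast
        have "?S $ j = (\<Sum>n<N. c n * (\<sigma> ^ n) $ j)" by (simp add: fps_sum_nth)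
        also have "\<dots> = (\<Sum>n\<in>{0..j}. c n * (\<sigma> ^ n) $ j)"
          using \<open>j \<le> k\<close> z
          by (intro sum.mono_neutral_right) (auto simp: N_def)
        also have "\<dots> = (C oo \<sigma>) $ j" by (simp add: fps_compose_nth C_def c_def)
        finally show ?thesis .
      qed
      thus ?thesis by (simp add: fps_mult_nth)
    qed
    ultimately show "(fps_const d * V) $ k = (?F * (C oo \<sigma>)) $ k" by simp
  qed
  have Ys: "Y oo \<sigma> = fps_const 2 * fps_X * fps_const d * V"
  proof -
    have "Y oo \<sigma> = fps_const (2 * a) * \<sigma> * (C oo \<sigma>)"
      unfolding Y_def by (simp add: fps_compose_mult_distrib[OF s0] fps_X_oo[OF s0])
    also have "\<dots> = fps_const 2 * fps_X * (fps_const a * (U + fps_const d) * (C oo \<sigma>))"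
      by (simp only: \<sigma>_def fps_const_mult[symmetric] mult_ac)
    also have "\<dots> = fps_const 2 * fps_X * fps_const d * V" by (subst claim[symmetric]) (simp only: mult.assoc)
    finally show ?thesis .
  qed
  let ?Q = "Y^2 - fps_const 2 * Y * (1 + fps_const (a - b) * fps_X) + fps_const (4 * a) * fps_X"
  have "?Q oo \<sigma> = (Y oo \<sigma>)^2 - fps_const 2 * (Y oo \<sigma>) * (1 + fps_const (a - b) * \<sigma>) + fps_const (4 * a) * \<sigma>"
    by (simp add: fps_compose_sub_distrib fps_compose_add_distrib fps_compose_mult_distrib[OF s0]
        fps_compose_power[OF s0] fps_X_oo[OF s0])
  also have "\<dots> = fps_const 4 * fps_X * fps_const b * (V * (1 + fps_const (d^2) * fps_X) - fps_const a)"
    unfolding Ys unfolding \<sigma>_def U_def d_def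
    by (simp only: fps_const_sub[symmetric] fps_const_mult[symmetric] fps_const_power[symmetric]
        fps_numeral_fps_const[symmetric]) algebra
  also have "\<dots> = 0" using V1 by simp
  finally have "?Q oo \<sigma> = 0" .
  moreover have "\<sigma> \<noteq> 0" using s1 d0 by auto
  ultimately show ?thesis using fps_compose_eq_0_iff[OF s0] by blast
qed



theorem mainTheorem3:
  fixes \<alpha> \<beta> x :: complex
  assumes "\<alpha> \<noteq> \<beta>" and "x \<noteq> \<alpha>"
  shows "Abs_fps (\<lambda>n. (\<alpha> - \<beta>) powi (int n - 1) * poly (gpoly \<alpha> \<beta> n) x) =
    (1 + fps_X * fps_const ((x - \<beta>) * (\<alpha> - \<beta>))
       - fps_sqrt1 (1 - fps_X * fps_const (2 * (x - \<beta>) * (\<alpha> + \<beta>))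
                      + fps_X ^ 2 * fps_const ((x - \<beta>) ^ 2 * (\<alpha> - \<beta>) ^ 2))
       + fps_const (2 * (x - \<alpha>) / (\<alpha> - \<beta>)))
    / (fps_const 2 * (fps_const (x - \<alpha>) + fps_const x * fps_X * fps_const ((\<alpha> - \<beta>) ^ 2)))"
  proof -
  define d where "d = \<alpha> - \<beta>"
  have d0: "d \<noteq> 0" using assms(1) by (simp add: d_def)
  define C where "C = Abs_fps (\<lambda>n. poly (gpoly \<alpha> \<beta> n) \<alpha>)"
  define Y where "Y = fps_const (2 * \<alpha>) * fps_X * C"
  define \<tau> where "\<tau> = fps_const (x - \<beta>) * fps_X"
  have t0: "\<tau> $ 0 = 0" by (simp add: \<tau>_def)
  define W where "W = Y oo \<tau>"
  have W0: "W $ 0 = 0" by (simp add: W_def Y_def)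
  have K: "Y^2 - fps_const 2 * Y * (1 + fps_const (\<alpha> - \<beta>) * fps_X) + fps_const (4 * \<alpha>) * fps_X = 0"
    using kernel[OF assms(1)] unfolding Y_def C_def by simp
  have quad: "W^2 - fps_const 2 * W * (1 + fps_const d * \<tau>) + fps_const (4 * \<alpha>) * \<tau> = 0"
  proof -
    have "(Y^2 - fps_const 2 * Y * (1 + fps_const (\<alpha> - \<beta>) * fps_X) + fps_const (4 * \<alpha>) * fps_X) oo \<tau> = 0"
      using K by simp
    thus ?thesis unfolding W_def d_def
      by (simp add: fps_compose_sub_distrib fps_compose_add_distrib fps_compose_mult_distrib[OF t0]
        fps_compose_power[OF t0] fps_X_oo[OF t0])
  qed
  define S where "S = 1 + fps_const d * \<tau> - W"
  define P where "P = 1 - fps_X * fps_const (2 * (x - \<beta>) * (\<alpha> + \<beta>))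
                      + fps_X ^ 2 * fps_const ((x - \<beta>) ^ 2 * (\<alpha> - \<beta>) ^ 2)"
  have SP: "S ^ 2 = P"
  proof -
    have "S ^ 2 - P = W^2 - fps_const 2 * W * (1 + fps_const d * \<tau>) + fps_const (4 * \<alpha>) * \<tau>"
      unfolding S_def P_def \<tau>_def d_def
      by (simp only: fps_const_sub[symmetric] fps_const_add[symmetric] fps_const_mult[symmetric]
          fps_const_power[symmetric] fps_numeral_fps_const[symmetric]) algebra
    thus ?thesis using quad by simp
  qed
  have P0: "P $ 0 = 1" by (simp add: P_def)
  have S0: "S $ 0 = 1" by (simp add: S_def W0 t0)
  have sqrtP: "fps_sqrt1 P = S"
  proof -
    have "S ^ Suc 1 = P \<longleftrightarrow> S = fps_radical (\<lambda>_ _. 1) (Suc 1) P"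
      by (rule radical_unique) (simp_all add: P0 S0)
    thus ?thesis using SP unfolding fps_sqrt1_def by (simp add: numeral_2_eq_2)
  qed
  define G where "G = Abs_fps (\<lambda>n. poly (Hp \<alpha> \<beta> n) x)"
  have LHS: "Abs_fps (\<lambda>n. (\<alpha> - \<beta>) powi (int n - 1) * poly (gpoly \<alpha> \<beta> n) x) = G"
    by (simp add: G_def Hp_def)
  have GR: "fps_const (x - \<alpha>) * G + fps_X * (fps_const (x * d^2) * G)
     = fps_const ((x - \<alpha>) / d) + fps_X * (fps_const (\<alpha> * (x - \<beta>)) * (C oo \<tau>))"
    using G_rel[OF assms(1), of x] unfolding G_def C_def \<tau>_def d_def .
  have WD: "W = fps_const (2 * \<alpha>) * \<tau> * (C oo \<tau>)"
    unfolding W_def Y_def by (simp add: fps_compose_mult_distrib[OF t0] fps_X_oo[OF t0])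
  define Den where "Den = fps_const 2 * (fps_const (x - \<alpha>) + fps_const x * fps_X * fps_const ((\<alpha> - \<beta>) ^ 2))"
  have Den0: "Den $ 0 \<noteq> 0" using assms(2) by (simp add: Den_def)
  define K0 where "K0 = fps_const ((x - \<alpha>) / d)"
  have K02: "fps_const (2 * (x - \<alpha>) / (\<alpha> - \<beta>)) = 2 * K0"
    by (simp add: K0_def d_def fps_numeral_fps_const)
  have GR': "fps_const (x - \<alpha>) * G + fps_X * (fps_const (x * d^2) * G)
     = K0 + fps_X * (fps_const (\<alpha> * (x - \<beta>)) * (C oo \<tau>))" using GR unfolding K0_def .
  have num: "1 + fps_X * fps_const ((x - \<beta>) * (\<alpha> - \<beta>)) - S + 2 * K0 = G * Den"
    using GR' unfolding S_def WD Den_def \<tau>_def d_def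
    by (simp only: fps_const_sub[symmetric] fps_const_add[symmetric] fps_const_mult[symmetric]
          fps_const_power[symmetric] fps_numeral_fps_const[symmetric]) algebra
  show ?thesis
    unfolding LHS sqrtP[unfolded P_def] K02 Den_def[symmetric] num
    using Den0 by (simp add: fps_divide_unit inverse_mult_eq_1')
qed

end
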